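(* Assume $\Lambda(\mathbf{f}_i,P)$ is a nonnegative integer for every $i$ and every $P\in\mathcal{U}$, and let $M=N\max_{i,P\in\mathcal{U}}\Lambda(\mathbf{f}_i,P)$. Let $\kappa^*\in\arg\max_{1\le\kappa\le M}\kappa/N_\kappa$. Then $\frac{\kappa^*}{N_{\kappa^*}}\ge\min_{P\in\mathcal{U}}\Lambda(w^*_N,P)\ge\frac{N_0}{N_0+1}\min_{P\in\mathcal{U}}\Lambda(w^*,P)$.
   Context: Setting: a simple directed acyclic graph $G=(V,E)$ with capacities $C\in\mathbb{R}_{\ge0}^E$, $s,t$ joined by a directed path, budget $0<\gamma\le\min_eC(e)$, and an uncertainty set $\mathcal{U}$ of finitely many sets $P$ of user paths (directed paths $p_1,\dots,p_k$ with initial values $\lambda_i\ge0$, $\sum_{i:e\in p_i}\lambda_i\le C(e)$). For an $s$-$t$ flow $\mathbf{f}$ ($0\le\mathbf{f}\le C$, conservation at $v\ne s,t$), $T(\mathbf{f},P)$ is the optimal value of: maximize $\sum_i\tilde\lambda_i$ s.t. $\sum_{i:e\in p_i}\tilde\lambda_i\le C(e)-\mathbf{f}(e)$, $0\le\tilde\lambda_i\le\lambda_i$; $\Lambda(\mathbf{f},P)=\sum_i\lambda_i-T(\mathbf{f},P)$; for a strategy (probability distribution) $w$, $\Lambda(w,P)=\sum_{\mathbf{f}}w(\mathbf{f})\Lambda(\mathbf{f},P)$. Let $\mathbf{f}_1,\dots,\mathbf{f}_L$ enumerate the single-path flows of value $\gamma$ (for each directed $s$-$t$ path, the flow equal to $\gamma$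 on its edges and $0$ elsewhere). Fix a positive integer $N_0$; an $N_0$-bounded strategy is a probability distribution on $\{\mathbf{f}_1,\dots,\mathbf{f}_L\}$ with at most $N_0$ nonzero probabilities, and $w^*$ is one maximizing $\min_{P\in\mathcal{U}}\Lambda(w,P)$ among them. Let $N=N_0^2+N_0$, $\mathcal{W}_N$ the set of probability distributions on $\{\mathbf{f}_1,\dots,\mathbf{f}_L\}$ all of whose probabilities lie in $\{\beta/N:\beta\in\{0,\dots,N\}\}$, and $w^*_N$ one maximizing $\min_{P\in\mathcal{U}}\Lambda(w,P)$ over $\mathcal{W}_N$. For a positive integer $\kappa$, $ILP(\kappa)$ is: minimize $\sum_ix_i$ subject to $\sum_ix_i\Lambda(\mathbf{f}_i,P)\ge\kappa$ for all $P\in\mathcal{U}$, $x_i\in\mathbb{N}$; $N_\kappa$ is its optimal value. *)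

theory Defs
  imports "HOL-Analysis.Analysis"
begin

type_synonym 'v edge = "'v \<times> 'v"
type_synonym 'v flow = "'v edge \<Rightarrow> real"
(* a set P of user paths: the list of users, user i has path fst (P!i) and initial value snd (P!i) *)
type_synonym 'v pathset = "('v list \<times> real) list"

definition path_edges :: "'v list \<Rightarrow> 'v edge set" where
  "path_edges p = set (zip p (tl p))"

definition is_dpath :: "'v edge set \<Rightarrow> 'v list \<Rightarrow> bool" where
  "is_dpath E p \<longleftrightarrow> length p \<ge> 2 \<and> distinct p \<and> (\<forall>i < length p - 1. (p ! i, p ! (i + 1)) \<in> E)"

definition st_paths :: "'v edge set \<Rightarrow> 'v \<Rightarrow> 'v \<Rightarrow> 'v list set" where
  "st_paths E s t = {p. is_dpath E p \<and> hd p = s \<and> last p = t}"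

definition path_flow :: "real \<Rightarrow> 'v list \<Rightarrow> 'v flow" where
  "path_flow \<gamma> p = (\<lambda>e. if e \<in> path_edges p then \<gamma> else 0)"

definition single_path_flows :: "'v edge set \<Rightarrow> 'v \<Rightarrow> 'v \<Rightarrow> real \<Rightarrow> 'v flow set" where
  "single_path_flows E s t \<gamma> = path_flow \<gamma> ` st_paths E s t"

definition valid_pathset :: "'v edge set \<Rightarrow> 'v flow \<Rightarrow> 'v pathset \<Rightarrow> bool" where
  "valid_pathset E C P \<longleftrightarrow>
     (\<forall>i < length P. is_dpath E (fst (P ! i)) \<and> snd (P ! i) \<ge> 0) \<and>
     (\<forall>e \<in> E. (\<Sum>i \<in> {i. i < length P \<and> e \<in> path_edges (fst (P ! i))}. snd (P ! i)) \<le> C e)"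

definition T_feasible :: "'v edge set \<Rightarrow> 'v flow \<Rightarrow> 'v flow \<Rightarrow> 'v pathset \<Rightarrow> (nat \<Rightarrow> real) \<Rightarrow> bool" where
  "T_feasible E C f P lt \<longleftrightarrow>
     (\<forall>e \<in> E. (\<Sum>i \<in> {i. i < length P \<and> e \<in> path_edges (fst (P ! i))}. lt i) \<le> C e - f e) \<and>
     (\<forall>i < length P. 0 \<le> lt i \<and> lt i \<le> snd (P ! i))"

definition T_val :: "'v edge set \<Rightarrow> 'v flow \<Rightarrow> 'v flow \<Rightarrow> 'v pathset \<Rightarrow> real" where
  "T_val E C f P = Sup {(\<Sum>i < length P. lt i) | lt. T_feasible E C f P lt}"

definition Loss :: "'v edge set \<Rightarrow> 'v flow \<Rightarrow> 'v flow \<Rightarrow> 'v pathset \<Rightarrow> real" where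
  "Loss E C f P = (\<Sum>i < length P. snd (P ! i)) - T_val E C f P"

definition is_strategy :: "'v flow set \<Rightarrow> ('v flow \<Rightarrow> real) \<Rightarrow> bool" where
  "is_strategy F w \<longleftrightarrow> (\<forall>f. f \<notin> F \<longrightarrow> w f = 0) \<and> (\<forall>f \<in> F. 0 \<le> w f) \<and> sum w F = 1"

definition strat_Loss :: "'v edge set \<Rightarrow> 'v flow \<Rightarrow> 'v flow set \<Rightarrow> ('v flow \<Rightarrow> real) \<Rightarrow> 'v pathset \<Rightarrow> real" where
  "strat_Loss E C F w P = (\<Sum>f \<in> F. w f * Loss E C f P)"

definition robust_Loss :: "'v edge set \<Rightarrow> 'v flow \<Rightarrow> 'v flow set \<Rightarrow> 'v pathset set \<Rightarrow> ('v flow \<Rightarrow> real) \<Rightarrow> real" where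
  "robust_Loss E C F U w = Min ((\<lambda>P. strat_Loss E C F w P) ` U)"

definition bounded_strategy :: "nat \<Rightarrow> 'v flow set \<Rightarrow> ('v flow \<Rightarrow> real) \<Rightarrow> bool" where
  "bounded_strategy N0 F w \<longleftrightarrow> is_strategy F w \<and> card {f \<in> F. w f \<noteq> 0} \<le> N0"

definition grid_strategy :: "nat \<Rightarrow> 'v flow set \<Rightarrow> ('v flow \<Rightarrow> real) \<Rightarrow> bool" where
  "grid_strategy N F w \<longleftrightarrow> is_strategy F w \<and> (\<forall>f \<in> F. \<exists>\<beta>::nat. \<beta> \<le> N \<and> w f = real \<beta> / real N)"

definition ILP_feasible :: "'v edge set \<Rightarrow> 'v flow \<Rightarrow> 'v flow set \<Rightarrow> 'v pathset set \<Rightarrow> nat \<Rightarrow> ('v flow \<Rightarrow> nat) \<Rightarrow> bool" where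
  "ILP_feasible E C F U \<kappa> x \<longleftrightarrow> (\<forall>P \<in> U. (\<Sum>f \<in> F. real (x f) * Loss E C f P) \<ge> real \<kappa>)"

definition N_kappa :: "'v edge set \<Rightarrow> 'v flow \<Rightarrow> 'v flow set \<Rightarrow> 'v pathset set \<Rightarrow> nat \<Rightarrow> nat" where
  "N_kappa E C F U \<kappa> = (LEAST n. \<exists>x. ILP_feasible E C F U \<kappa> x \<and> (\<Sum>f \<in> F. x f) = n)"

(* kappa / N_kappa, with the convention kappa / N_kappa = 0 (i.e. N_kappa = infinity)
   when ILP(kappa) is infeasible *)
definition ILP_ratio :: "'v edge set \<Rightarrow> 'v flow \<Rightarrow> 'v flow set \<Rightarrow> 'v pathset set \<Rightarrow> nat \<Rightarrow> real" where
  "ILP_ratio E C F U \<kappa> =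
     (if \<exists>x. ILP_feasible E C F U \<kappa> x then real \<kappa> / real (N_kappa E C F U \<kappa>) else 0)"

end

theory Submission
  imports Defs
begin

lemma st_paths_finite:
  assumes finV: "finite V" and EV: "E \<subseteq> V \<times> V"
  shows "finite (st_paths E s t)"
proof -
  have "st_paths E s t \<subseteq> {xs. set xs \<subseteq> V \<and> distinct xs}"
  proof
    fix p assume "p \<in> st_paths E s t"
    then have dp: "is_dpath E p" by (simp add: st_paths_def)
    then have len: "length p \<ge> 2" and dis: "distinct p"
      and ed: "\<forall>i < length p - 1. (p ! i, p ! (i + 1)) \<in> E" by (auto simp: is_dpath_def)
    have "p ! j \<in> V" if j: "j < length p" for j
    proof (cases "j < length p - 1")
      case True
      then have "(p ! j, p ! (j+1)) \<in> E" using ed by blast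
      then show ?thesis using EV by auto
    next
      case False
      then have "j - 1 < length p - 1" "j - 1 + 1 = j" using j len by auto
      then have "(p ! (j-1), p ! j) \<in> E" using ed by metis
      then show ?thesis using EV by auto
    qed
    then have "set p \<subseteq> V" by (auto simp: in_set_conv_nth)
    then show "p \<in> {xs. set xs \<subseteq> V \<and> distinct xs}" using dis by simp
  qed
  then show ?thesis using finite_subset_distinct[OF finV] finite_subset by blast
qed

theorem lemma5:
  fixes V :: "'v set" and E :: "'v edge set" and C :: "'v flow" and s t :: 'v
    and \<gamma> :: real and U :: "'v pathset set" and N0 N :: nat and M :: real
    and w_star w_N :: "'v flow \<Rightarrow> real" and \<kappa>_star :: nat
  defines "F \<equiv> single_path_flows E s t \<gamma>"
  assumes finV: "finite V" and EV: "E \<subseteq> V \<times> V" and dag: "acyclic E"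
    and sV: "s \<in> V" and tV: "t \<in> V" and st_conn: "st_paths E s t \<noteq> {}"
    and Cnonneg: "\<forall>e \<in> E. 0 \<le> C e"
    and gpos: "0 < \<gamma>" and gle: "\<forall>e \<in> E. \<gamma> \<le> C e"
    and finU: "finite U" and Une: "U \<noteq> {}"
    and Uvalid: "\<forall>P \<in> U. valid_pathset E C P"
    and N0pos: "0 < N0" and Ndef: "N = N0 ^ 2 + N0"
    and integral: "\<forall>f \<in> F. \<forall>P \<in> U. Loss E C f P \<in> \<nat>"
    and Mdef: "M = real N * Max ((\<lambda>(f, P). Loss E C f P) ` (F \<times> U))"
    and kappa_range: "1 \<le> \<kappa>_star" "real \<kappa>_star \<le> M"
    and kappa_opt: "\<forall>\<kappa>::nat. 1 \<le> \<kappa> \<and> real \<kappa> \<le> M \<longrightarrow>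
                       ILP_ratio E C F U \<kappa> \<le> ILP_ratio E C F U \<kappa>_star"
    and wstar: "bounded_strategy N0 F w_star"
    and wstar_opt: "\<forall>w. bounded_strategy N0 F w \<longrightarrow>
                       robust_Loss E C F U w \<le> robust_Loss E C F U w_star"
    and wN: "grid_strategy N F w_N"
    and wN_opt: "\<forall>w. grid_strategy N F w \<longrightarrow>
                       robust_Loss E C F U w \<le> robust_Loss E C F U w_N"
  shows "ILP_ratio E C F U \<kappa>_star \<ge> robust_Loss E C F U w_N \<and>
         robust_Loss E C F U w_N \<ge> real N0 / (real N0 + 1) * robust_Loss E C F U w_star"
proof -
  have finF: "finite F" unfolding F_def single_path_flows_def
    using st_paths_finite[OF finV EV] by blast
  have Fne: "F \<noteq> {}" unfolding F_def single_path_flows_def using st_conn by blast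
  have Npos: "N > 0" using N0pos Ndef by simp
  have "\<forall>f \<in> F. \<forall>P \<in> U. \<exists>n::nat. Loss E C f P = real n"
    using integral by (metis Nats_cases)
  then obtain L :: "'v flow \<Rightarrow> 'v pathset \<Rightarrow> nat" where
    L: "\<And>f P. f \<in> F \<Longrightarrow> P \<in> U \<Longrightarrow> Loss E C f P = real (L f P)" by metis
  have Lnn: "\<And>f P. f \<in> F \<Longrightarrow> P \<in> U \<Longrightarrow> Loss E C f P \<ge> 0" using L by simp
  have ratio_nn: "\<And>k. ILP_ratio E C F U k \<ge> 0" by (simp add: ILP_ratio_def)
  have part1: "ILP_ratio E C F U \<kappa>_star \<ge> robust_Loss E C F U w_N"
  proof -
    let ?l = "robust_Loss E C F U w_N"
    obtain P0 where P0: "P0 \<in> U" and l: "?l = strat_Loss E C F w_N P0"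
    proof -
      have "Min ((\<lambda>P. strat_Loss E C F w_N P) ` U) \<in> (\<lambda>P. strat_Loss E C F w_N P) ` U"
        using finU Une by (intro Min_in) auto
      then show ?thesis using that unfolding robust_Loss_def by auto
    qed
    have lle: "\<And>P. P \<in> U \<Longrightarrow> ?l \<le> strat_Loss E C F w_N P"
      unfolding robust_Loss_def using finU by auto
    have "\<forall>f \<in> F. \<exists>\<beta>::nat. \<beta> \<le> N \<and> w_N f = real \<beta> / real N" using wN by (simp add: grid_strategy_def)
    then obtain \<beta> :: "'v flow \<Rightarrow> nat" where
      \<beta>: "\<And>f. f \<in> F \<Longrightarrow> w_N f = real (\<beta> f) / real N" by metis
    have strat_eq: "real N * strat_Loss E C F w_N P = (\<Sum>f\<in>F. real (\<beta> f) * Loss E C f P)" for P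
      unfolding strat_Loss_def sum_distrib_left using Npos
      by (intro sum.cong) (auto simp: \<beta>)
    have sumw: "sum w_N F = 1" using wN by (simp add: grid_strategy_def is_strategy_def)
    have "real N * sum w_N F = (\<Sum>f\<in>F. real (\<beta> f))"
      unfolding sum_distrib_left using Npos by (intro sum.cong) (auto simp: \<beta>)
    then have sumb: "(\<Sum>f\<in>F. \<beta> f) = N" using sumw by (metis mult.right_neutral of_nat_eq_iff of_nat_sum)
    define k where "k = (\<Sum>f\<in>F. \<beta> f * L f P0)"
    have k: "real k = real N * ?l" unfolding k_def l strat_eq using L P0 by simp
    show ?thesis
    proof (cases "k = 0")
      case True
      then have "?l = 0" using k Npos by simp
      then show ?thesis using ratio_nn by simp
    next
      case False
      have feas: "ILP_feasible E C F U k \<beta>"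
        unfolding ILP_feasible_def
      proof
        fix P assume "P \<in> U"
        then have "?l \<le> strat_Loss E C F w_N P" by (rule lle)
        then have "real N * ?l \<le> real N * strat_Loss E C F w_N P" using Npos by simp
        then show "real k \<le> (\<Sum>f\<in>F. real (\<beta> f) * Loss E C f P)" using k strat_eq by simp
      qed
      have ex: "\<exists>n x. ILP_feasible E C F U k x \<and> (\<Sum>f \<in> F. x f) = n" using feas by blast
      have Nk_le: "N_kappa E C F U k \<le> N" unfolding N_kappa_def
        using feas sumb by (intro Least_le) blast
      have Nk_pos: "N_kappa E C F U k > 0"
      proof (rule ccontr)
        assume "\<not> ?thesis"
        then have "N_kappa E C F U k = 0" by simp
        then obtain x where x: "ILP_feasible E C F U k x" "(\<Sum>f \<in> F. x f) = 0"
          unfolding N_kappa_def using LeastI_ex[OF ex] by auto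
        then have "\<forall>f\<in>F. x f = 0" using finF by simp
        then have "(\<Sum>f\<in>F. real (x f) * Loss E C f P0) = 0" by simp
        moreover have "real k \<le> (\<Sum>f\<in>F. real (x f) * Loss E C f P0)"
          using x(1) P0 unfolding ILP_feasible_def by blast
        ultimately show False using False by simp
      qed
      have r: "ILP_ratio E C F U k = real k / real (N_kappa E C F U k)"
        unfolding ILP_ratio_def using feas by auto
      have "real k / real N \<le> real k / real (N_kappa E C F U k)"
        using Nk_le Nk_pos by (intro divide_left_mono) auto
      then have lr: "?l \<le> ILP_ratio E C F U k" using r k Npos by simp
      define Mx where "Mx = Max ((\<lambda>(f, P). Loss E C f P) ` (F \<times> U))"
      have finFU: "finite (F \<times> U)" using finF finU by simp
      have LM: "Loss E C f P0 \<le> Mx" if "f \<in> F" for f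
      proof -
        have "(f, P0) \<in> F \<times> U" using that P0 by simp
        then have "Loss E C f P0 \<in> (\<lambda>(f, P). Loss E C f P) ` (F \<times> U)" by force
        then show ?thesis unfolding Mx_def using finFU by simp
      qed
      have wnn: "\<And>f. f \<in> F \<Longrightarrow> 0 \<le> w_N f" using \<beta> by simp
      have "?l \<le> (\<Sum>f\<in>F. w_N f * Mx)" unfolding l strat_Loss_def
        using LM wnn by (intro sum_mono mult_left_mono) auto
      also have "\<dots> = Mx" using sumw by (simp add: sum_distrib_right[symmetric])
      finally have "?l \<le> Mx" .
      then have "real k \<le> M" using k Mdef Mx_def Npos by simp
      then have "ILP_ratio E C F U k \<le> ILP_ratio E C F U \<kappa>_star"
        using kappa_opt False by simp
      then show ?thesis using lr by simp
    qed
  qed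
  have part2: "robust_Loss E C F U w_N \<ge> real N0 / (real N0 + 1) * robust_Loss E C F U w_star"
  proof -
    define c where "c = real N0 / (real N0 + 1)"
    have RN: "real N = real N0 * (real N0 + 1)" unfolding Ndef by (simp add: power2_eq_square algebra_simps)
    have c_eq: "c = real N0 ^ 2 / real N" unfolding c_def RN using N0pos
      by (simp add: power2_eq_square)
    have ws: "is_strategy F w_star" and card_supp: "card {f \<in> F. w_star f \<noteq> 0} \<le> N0"
      using wstar by (auto simp: bounded_strategy_def)
    have wsnn: "\<And>f. f \<in> F \<Longrightarrow> 0 \<le> w_star f" and wssum: "sum w_star F = 1"
      using ws by (auto simp: is_strategy_def)
    define b where "b f = nat \<lceil>real N0 ^ 2 * w_star f\<rceil>" for f
    have b_ge: "real (b f) \<ge> real N0 ^ 2 * w_star f" for f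
      unfolding b_def by linarith
    have b_le: "real (b f) \<le> real N0 ^ 2 * w_star f + (if w_star f \<noteq> 0 then 1 else 0)"
      if "f \<in> F" for f
    proof (cases "w_star f = 0")
      case True then show ?thesis unfolding b_def by simp
    next
      case False
      have "0 \<le> real N0 ^ 2 * w_star f" using wsnn[OF that] by simp
      then have "real (nat \<lceil>real N0 ^ 2 * w_star f\<rceil>) = real_of_int \<lceil>real N0 ^ 2 * w_star f\<rceil>"
        by simp
      moreover have "real_of_int \<lceil>real N0 ^ 2 * w_star f\<rceil> \<le> real N0 ^ 2 * w_star f + 1" by linarith
      ultimately show ?thesis unfolding b_def using False by simp
    qed
    have "real (\<Sum>f\<in>F. b f) \<le> (\<Sum>f\<in>F. real N0 ^ 2 * w_star f + (if w_star f \<noteq> 0 then 1 else 0))"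
      unfolding of_nat_sum using b_le by (intro sum_mono) auto
    also have "\<dots> = real N0 ^ 2 + real (card {f \<in> F. w_star f \<noteq> 0})"
      using finF wssum by (simp add: sum.distrib sum_distrib_left[symmetric] sum.inter_filter[symmetric])
    also have "\<dots> \<le> real N" using card_supp Ndef by simp
    finally have bsum: "(\<Sum>f\<in>F. b f) \<le> N" by linarith
    obtain f0 where f0: "f0 \<in> F" using Fne by blast
    define ex where "ex = N - (\<Sum>f\<in>F. b f)"
    define \<beta> where "\<beta> f = b f + (if f = f0 then ex else 0)" for f
    have sb: "(\<Sum>f\<in>F. \<beta> f) = N"
      unfolding \<beta>_def sum.distrib using finF f0 bsum ex_def by (simp add: sum.delta)
    define w where "w f = (if f \<in> F then real (\<beta> f) / real N else 0)" for f
    have grid: "grid_strategy N F w"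
      unfolding grid_strategy_def is_strategy_def
    proof (intro conjI ballI allI impI)
      show "sum w F = 1" unfolding w_def using sb Npos
        by (simp add: sum_divide_distrib[symmetric] of_nat_sum[symmetric])
      fix f assume fF: "f \<in> F"
      have "\<beta> f \<le> N" using sb finF fF by (metis member_le_sum zero_le)
      then show "\<exists>\<beta>'::nat. \<beta>' \<le> N \<and> w f = real \<beta>' / real N" using fF w_def by auto
    qed (auto simp: w_def)
    have wge: "c * w_star f \<le> w f" if "f \<in> F" for f
    proof -
      have "c * w_star f = real N0 ^ 2 * w_star f / real N" using c_eq by simp
      also have "\<dots> \<le> real (b f) / real N" using b_ge Npos by (simp add: divide_right_mono)
      also have "\<dots> \<le> w f" unfolding w_def \<beta>_def using that Npos by (simp add: divide_right_mono)
      finally show ?thesis .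
    qed
    have cnn: "c \<ge> 0" unfolding c_def by simp
    have "c * robust_Loss E C F U w_star \<le> robust_Loss E C F U w"
      unfolding robust_Loss_def
    proof (subst Min_ge_iff)
      show "finite ((\<lambda>P. strat_Loss E C F w P) ` U)" using finU by simp
      show "(\<lambda>P. strat_Loss E C F w P) ` U \<noteq> {}" using Une by simp
      show "\<forall>a\<in>(\<lambda>P. strat_Loss E C F w P) ` U. c * Min ((\<lambda>P. strat_Loss E C F w_star P) ` U) \<le> a"
      proof
        fix a assume "a \<in> (\<lambda>P. strat_Loss E C F w P) ` U"
        then obtain P where P: "P \<in> U" and a: "a = strat_Loss E C F w P" by blast
        have "Min ((\<lambda>P. strat_Loss E C F w_star P) ` U) \<le> strat_Loss E C F w_star P"
          using finU P by simp
        then have "c * Min ((\<lambda>P. strat_Loss E C F w_star P) ` U) \<le> c * strat_Loss E C F w_star P"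
          using cnn by (rule mult_left_mono)
        also have "\<dots> = (\<Sum>f\<in>F. (c * w_star f) * Loss E C f P)"
          unfolding strat_Loss_def sum_distrib_left by (simp add: mult.assoc)
        also have "\<dots> \<le> (\<Sum>f\<in>F. w f * Loss E C f P)"
          using wge Lnn P by (intro sum_mono mult_right_mono) auto
        finally show "c * Min ((\<lambda>P. strat_Loss E C F w_star P) ` U) \<le> a"
          using a by (simp add: strat_Loss_def)
      qed
    qed
    also have "\<dots> \<le> robust_Loss E C F U w_N" using wN_opt grid by blast
    finally show ?thesis unfolding c_def .
  qed
  show ?thesis using part1 part2 by blast
qed

end
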